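(* Let $\mathcal{A}_l\subseteq\mathcal{A}$ be nonempty, $\alpha=\frac{T_{\mathrm{off}}}{T_{\mathrm{off}}+T}$, and let $\pi^{(t)}\in\Delta(\mathcal{A}_l)$ be an iterate of the Frank–Wolfe procedure described in the context with $\delta(\pi^{(t)})\le\frac{d_{\mathrm{eff}}}{d}$. Then, with $\tilde\pi^{(t)}=(1-\alpha)\pi^{(t)}+\alpha\pi_{\mathrm{off}}$, $$(1-\alpha)g_{\mathcal{A}_l}(\tilde\pi^{(t)})\le2d_{\mathrm{eff}}.$$
   Context: $\mathcal{A}\subset\mathbb{R}^d$ finite, spanning $\mathbb{R}^d$, $d\ge2$; $\pi_{\mathrm{off}}\in\Delta(\mathcal{A})$; $T\ge1$, $T_{\mathrm{off}}\ge0$ integers. $V_\pi=\sum_a\pi(a)aa^\top$, $g_{\mathcal{B}}(\pi)=\max_{a\in\mathcal{B}}a^\top V_\pi^{-1}a$, $\lambda_k$ the $k$-th smallest eigenvalue, $d_{\mathrm{eff}}=\min\big(\sum_{k=1}^d(1+\frac{T_{\mathrm{off}}}{T}\frac{\lambda_k(V_{\pi_{\mathrm{off}}})}{\max_a\|a\|^2})^{-1},\frac{T}{T_{\mathrm{off}}}g_{\mathcal{A}}(\pi_{\mathrm{off}})\big)$. Frank–Wolfe procedure: initialization $B=\emptyset$, $c=e_1$; for $i=1,\dots,d$ add $a\in\arg\max_{a\in\mathcal{A}_l}|\langle c,a\rangle|$ to $B$ and let $c$ be a nonzero vector orthogonal to all elements of $B$; $\pi^{(0)}$ uniform on $B$.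 For $\pi$ with $(1-\alpha)V_\pi+\alpha V_{\pi_{\mathrm{off}}}$ nonsingular let $H(\pi)=((1-\alpha)V_\pi+\alpha V_{\pi_{\mathrm{off}}})^{-1}$, $w_a=\mathrm{Tr}(H(\pi)((1-\alpha)aa^\top+\alpha V_{\pi_{\mathrm{off}}}))$ for $a\in\mathcal{A}_l$, $a_+\in\arg\max_aw_a$, slack $\delta(\pi)=w_{a_+}/d-1$; update $\pi^{(t+1)}=(1+\beta)^{-1}(\pi^{(t)}+\beta\mathbb{1}_{\{a_+\}})$ with $\beta=\frac{w_{a_+}-d}{(d-1)w_{a_+}}$. *)

theory Defs
  imports "HOL-Analysis.Analysis" "HOL-Computational_Algebra.Polynomial"
begin

definition outer :: "real^'n \<Rightarrow> real^'n^'n" where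
  "outer a = (\<chi> i j. a$i * a$j)"

definition prob_dists :: "(real^'n) set \<Rightarrow> (real^'n \<Rightarrow> real) set" where
  "prob_dists S = {p. (\<forall>a. 0 \<le> p a) \<and> (\<forall>a. a \<notin> S \<longrightarrow> p a = 0) \<and> (\<Sum>a\<in>S. p a) = 1}"

definition Vmat :: "(real^'n) set \<Rightarrow> (real^'n \<Rightarrow> real) \<Rightarrow> real^'n^'n" where
  "Vmat A p = (\<Sum>a\<in>A. p a *\<^sub>R outer a)"

definition gval :: "(real^'n) set \<Rightarrow> (real^'n) set \<Rightarrow> (real^'n \<Rightarrow> real) \<Rightarrow> real" where
  "gval A B p = Max ((\<lambda>a. a \<bullet> (matrix_inv (Vmat A p) *v a)) ` B)"

definition charpoly :: "real^'n^'n \<Rightarrow> real poly" where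
  "charpoly M = det (\<chi> i j. (if i = j then [:0, 1:] else 0) - [:M$i$j:])"

(* lambda_k(M): k-th smallest eigenvalue (with multiplicity), k = 1..CARD('n) *)
definition eigval :: "nat \<Rightarrow> real^'n^'n \<Rightarrow> real" where
  "eigval k M = sorted_list_of_multiset (proots (charpoly M)) ! (k - 1)"

definition alpha :: "nat \<Rightarrow> nat \<Rightarrow> real" where
  "alpha T Toff = real Toff / (real Toff + real T)"

(* d_eff; convention: T/T_off * g_A(pi_off) = +infinity if T_off = 0 or V_{pi_off} singular *)
definition deff :: "(real^'n) set \<Rightarrow> (real^'n \<Rightarrow> real) \<Rightarrow> nat \<Rightarrow> nat \<Rightarrow> real" where
  "deff A poff T Toff =
    (let s = (\<Sum>k=1..CARD('n). inverse (1 + (real Toff / real T) *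
                 (eigval k (Vmat A poff :: real^'n^'n) / Max ((\<lambda>a. (norm a)^2) ` A))))
     in if Toff = 0 \<or> \<not> invertible (Vmat A poff) then s
        else min s ((real T / real Toff) * gval A A poff))"

definition Hmat :: "(real^'n) set \<Rightarrow> (real^'n \<Rightarrow> real) \<Rightarrow> real \<Rightarrow> (real^'n \<Rightarrow> real) \<Rightarrow> real^'n^'n" where
  "Hmat A poff al p = matrix_inv ((1 - al) *\<^sub>R Vmat A p + al *\<^sub>R Vmat A poff)"

definition wval :: "(real^'n) set \<Rightarrow> (real^'n \<Rightarrow> real) \<Rightarrow> real \<Rightarrow> (real^'n \<Rightarrow> real) \<Rightarrow> real^'n \<Rightarrow> real" where
  "wval A poff al p a = trace (Hmat A poff al p ** ((1 - al) *\<^sub>R outer a + al *\<^sub>R Vmat A poff))"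

definition slack :: "(real^'n) set \<Rightarrow> (real^'n) set \<Rightarrow> (real^'n \<Rightarrow> real) \<Rightarrow> real \<Rightarrow> (real^'n \<Rightarrow> real) \<Rightarrow> real" where
  "slack A Al poff al p = Max (wval A poff al p ` Al) / real CARD('n) - 1"

definition e1 :: "(real, 'n::{finite,wellorder}) vec" where
  "e1 = axis (LEAST i. True) 1"

(* admissible outcomes bs = [b_1,...,b_d] of the initialization loop:
   c_1 = e_1, and for i >= 2, c_i is a nonzero vector orthogonal to b_1..b_{i-1};
   b_i in argmax_{a in Al} |<c_i, a>| *)
definition fw_init :: "((real, 'n::{finite,wellorder}) vec) set \<Rightarrow> ((real, 'n) vec) list \<Rightarrow> bool" where
  "fw_init Al bs \<longleftrightarrow> length bs = CARD('n::{finite,wellorder}) \<and>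
     (\<forall>i < CARD('n::{finite,wellorder}). \<exists>c.
        (if i = 0 then c = e1 else c \<noteq> 0 \<and> (\<forall>j < i. c \<bullet> bs ! j = 0)) \<and>
        bs ! i \<in> Al \<and> (\<forall>a\<in>Al. \<bar>c \<bullet> a\<bar> \<le> \<bar>c \<bullet> bs ! i\<bar>))"

definition unif :: "((real, 'n) vec) set \<Rightarrow> real^'n \<Rightarrow> real" where
  "unif B a = (if a \<in> B then 1 / real (card B) else 0)"

(* the iterates pi^(0), pi^(1), ... of the Frank-Wolfe procedure (for any admissible choices) *)
inductive fw_iter :: "((real, 'n::{finite,wellorder}) vec) set \<Rightarrow> ((real, 'n) vec) set \<Rightarrow> ((real, 'n) vec \<Rightarrow> real) \<Rightarrow> real
                       \<Rightarrow> ((real, 'n) vec \<Rightarrow> real) \<Rightarrow> bool"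
  for A Al poff al where
  init: "fw_init Al bs \<Longrightarrow> fw_iter A Al poff al (unif (set bs))"
| step: "fw_iter A Al poff al p \<Longrightarrow>
         invertible ((1 - al) *\<^sub>R Vmat A p + al *\<^sub>R Vmat A poff) \<Longrightarrow>
         ap \<in> Al \<Longrightarrow> (\<forall>a\<in>Al. wval A poff al p a \<le> wval A poff al p ap) \<Longrightarrow>
         \<beta> = (wval A poff al p ap - real CARD('n::{finite,wellorder})) / ((real CARD('n::{finite,wellorder}) - 1) * wval A poff al p ap) \<Longrightarrow>
         fw_iter A Al poff al (\<lambda>a. (p a + \<beta> * (if a = ap then 1 else 0)) / (1 + \<beta>))"

end

theory Submission
  imports Defs
begin


lemma sym_inner:
  fixes S :: "real^'n^'n"
  assumes "transpose S = S"
  shows "x \<bullet> (S *v y) = (S *v x) \<bullet> y"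
  by (metis assms dot_lmul_matrix transpose_matrix_vector)

lemma quad_le0_lin0:
  fixes b c :: real
  assumes "\<And>t. 2*t*b + t^2*c \<le> 0"
  shows "b = 0"
proof (rule ccontr)
  assume b: "b \<noteq> 0"
  define K where "K = \<bar>c\<bar> + 1"
  have K: "K > 0" unfolding K_def by simp
  have "2*(b/K)*b + (b/K)^2*c \<le> 0" by (rule assms)
  hence "(2*(b/K)*b + (b/K)^2*c) * K^2 \<le> 0" using K
    by (simp add: mult_nonpos_nonneg)
  moreover have "(2*(b/K)*b + (b/K)^2*c) * K^2 = b^2 * (2*K + c)" using K
    by (simp add: field_simps power2_eq_square)
  moreover have "2*K + c > 0" using abs_ge_minus_self[of c] unfolding K_def by (simp add: algebra_simps)
  moreover have "b^2 > 0" using b by simp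
  ultimately show False by (metis mult_pos_pos not_le)
qed

lemma spectral_subspace:
  fixes S :: "real^'n^'n"
  assumes sym: "transpose S = S"
  shows "subspace W \<Longrightarrow> (\<forall>x\<in>W. S *v x \<in> W) \<Longrightarrow>
    \<exists>B. B \<subseteq> W \<and> finite B \<and> card B = dim W \<and>
        (\<forall>b\<in>B. norm b = 1 \<and> (\<exists>\<mu>. S *v b = \<mu> *\<^sub>R b)) \<and>
        (\<forall>b\<in>B. \<forall>c\<in>B. b \<noteq> c \<longrightarrow> b \<bullet> c = 0)"
proof (induction "dim W" arbitrary: W)
  case 0
  then show ?case by (intro exI[of _ "{}"]) auto
next
  case (Suc n)
  note W = Suc.prems(1) and inv = Suc.prems(2)
  define K where "K = W \<inter> sphere 0 1"
  have "\<not> W \<subseteq> {0}" by (metis Suc.hyps(2) dim_eq_0 nat.distinct(1))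
  then obtain w where w: "w \<in> W" "w \<noteq> 0" by auto
  have "w /\<^sub>R norm w \<in> K" unfolding K_def using w W
    by (simp add: subspace_scale)
  hence Kne: "K \<noteq> {}" by auto
  have Kc: "compact K" unfolding K_def
    using closed_subspace[OF W] compact_sphere by (simp add: closed_Int_compact)
  have cont: "continuous_on K (\<lambda>x. x \<bullet> (S *v x))"
    by (intro continuous_intros matrix_vector_mult_linear_continuous_on)
  obtain v where v: "v \<in> K" and vmax: "\<And>y. y \<in> K \<Longrightarrow> y \<bullet> (S *v y) \<le> v \<bullet> (S *v v)"
    using continuous_attains_sup[OF Kc Kne cont] by blast
  define lam where "lam = v \<bullet> (S *v v)"
  have vW: "v \<in> W" and nv: "norm v = 1" using v unfolding K_def by auto
  have vv: "v \<bullet> v = 1" using nv by (simp add: dot_square_norm)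
  have orth: "v \<bullet> (S *v w) = 0" if wW: "w \<in> W" and wv: "w \<bullet> v = 0" for w
  proof (rule quad_le0_lin0)
    fix t :: real
    define u where "u = v + t *\<^sub>R w"
    have uW: "u \<in> W" unfolding u_def using vW wW W by (simp add: subspace_add subspace_scale)
    have nu: "u \<bullet> u = 1 + t^2 * (w \<bullet> w)" unfolding u_def using vv wv
      by (simp add: algebra_simps inner_commute power2_eq_square)
    have nu2: "norm u ^2 = u \<bullet> u" by (simp add: dot_square_norm)
    have upos: "norm u > 0" 
    proof -
      have "u \<bullet> u \<ge> 1" unfolding nu by simp
      thus ?thesis using nu2 by (metis norm_eq_zero inner_zero_left norm_ge_zero not_le order.not_eq_order_implies_strict zero_less_one)
    qed
    have "u /\<^sub>R norm u \<in> K" unfolding K_def using uW W upos by (simp add: subspace_scale)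
    hence "(u /\<^sub>R norm u) \<bullet> (S *v (u /\<^sub>R norm u)) \<le> lam" unfolding lam_def by (rule vmax)
    hence "(u \<bullet> (S *v u)) / (norm u)^2 \<le> lam"
      by (simp add: matrix_vector_mult_scaleR power2_eq_square divide_inverse mult.commute mult.left_commute)
    hence le: "u \<bullet> (S *v u) \<le> lam * (u \<bullet> u)" using upos nu2 by (simp add: divide_le_eq)
    have sw: "w \<bullet> (S *v v) = v \<bullet> (S *v w)" using sym_inner[OF sym] by (simp add: inner_commute)
    have "u \<bullet> (S *v u) = lam + 2*t*(v \<bullet> (S *v w)) + t^2 * (w \<bullet> (S *v w))"
      unfolding u_def lam_def using sw
      by (simp add: matrix_vector_right_distrib matrix_vector_mult_scaleR algebra_simps power2_eq_square)
    with le nu show "2*t*(v \<bullet> (S *v w)) + t^2 * (w \<bullet> (S *v w) - lam * (w \<bullet> w)) \<le> 0"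
      by (simp add: algebra_simps)
  qed
  define z where "z = S *v v - lam *\<^sub>R v"
  have zW: "z \<in> W" unfolding z_def using vW inv W by (simp add: subspace_diff subspace_scale)
  have zv: "z \<bullet> v = 0" unfolding z_def lam_def using vv by (simp add: inner_diff_left inner_commute[of "S *v v" v])
  have "v \<bullet> (S *v z) = z \<bullet> z"
    using sym_inner[OF sym, of v z] zv unfolding z_def 
    by (simp add: inner_diff_left inner_diff_right inner_commute)
  hence "z \<bullet> z = 0" using orth[OF zW zv] by simp
  hence eig: "S *v v = lam *\<^sub>R v" unfolding z_def by simp
  define W' where "W' = {y \<in> W. \<forall>x \<in> span {v}. orthogonal x y}"
  have W'eq: "W' = {y \<in> W. v \<bullet> y = 0}"
    unfolding W'_def orthogonal_def by (auto simp: span_singleton)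
  have sW': "subspace W'" unfolding W'eq
    using W by (auto simp: subspace_def inner_add_right)
  have dimv: "dim (span {v}) = 1" using nv by (auto simp add: dim_span dim_insert)
  have "dim W' + dim (span {v}) = dim W" unfolding W'_def
    by (rule dim_subspace_orthogonal_to_vectors) (use vW W in \<open>auto simp: span_minimal\<close>)
  hence dW': "n = dim W'" using Suc.hyps(2) dimv by simp
  have invW': "\<forall>x\<in>W'. S *v x \<in> W'"
  proof
    fix x assume "x \<in> W'"
    hence x: "x \<in> W" "v \<bullet> x = 0" unfolding W'eq by auto
    have "v \<bullet> (S *v x) = (S *v v) \<bullet> x" by (rule sym_inner[OF sym])
    also have "\<dots> = 0" using eig x by simp
    finally show "S *v x \<in> W'" unfolding W'eq using inv x by auto
  qed
  obtain B' where B': "B' \<subseteq> W'" "finite B'" "card B' = dim W'"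
     "\<forall>b\<in>B'. norm b = 1 \<and> (\<exists>\<mu>. S *v b = \<mu> *\<^sub>R b)"
     "\<forall>b\<in>B'. \<forall>c\<in>B'. b \<noteq> c \<longrightarrow> b \<bullet> c = 0"
    using Suc.hyps(1)[OF dW' sW' invW'] by blast
  have vB': "v \<notin> B'" using B'(1) vv unfolding W'eq by auto
  show ?case
  proof (intro exI[of _ "insert v B'"] conjI)
    show "insert v B' \<subseteq> W" using B'(1) vW unfolding W'eq by auto
    show "finite (insert v B')" using B' by simp
    show "card (insert v B') = dim W" using B' vB' dW' Suc.hyps(2) by simp
    show "\<forall>b\<in>insert v B'. norm b = 1 \<and> (\<exists>\<mu>. S *v b = \<mu> *\<^sub>R b)" using B' nv eig by auto
    show "\<forall>b\<in>insert v B'. \<forall>c\<in>insert v B'. b \<noteq> c \<longrightarrow> b \<bullet> c = 0"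
      using B'(1,5) unfolding W'eq by (auto simp: inner_commute)
  qed
qed



lemma spectral:
  fixes S :: "real^'n^'n"
  assumes sym: "transpose S = S"
  obtains q :: "'n \<Rightarrow> real^'n" and \<mu> :: "'n \<Rightarrow> real"
  where "\<And>i j. q i \<bullet> q j = (if i = j then 1 else 0)" "\<And>i. S *v q i = \<mu> i *\<^sub>R q i"
proof -
  obtain B where B: "finite B" "card B = dim (UNIV :: (real^'n) set)"
        "\<forall>b\<in>B. norm b = 1 \<and> (\<exists>\<mu>. S *v b = \<mu> *\<^sub>R b)"
        "\<forall>b\<in>B. \<forall>c\<in>B. b \<noteq> c \<longrightarrow> b \<bullet> c = 0"
    using spectral_subspace[OF sym, of UNIV] by auto
  have "card B = card (UNIV :: 'n set)" using B(2) by simp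
  then obtain h where h: "bij_betw h (UNIV :: 'n set) B"
    using finite_same_card_bij[of "UNIV::'n set" B] B(1) by auto
  define \<mu> where "\<mu> i = (SOME m. S *v h i = m *\<^sub>R h i)" for i
  show ?thesis
  proof
    fix i j
    have hi: "h i \<in> B" "h j \<in> B" using bij_betw_apply[OF h] by auto
    show "h i \<bullet> h j = (if i = j then 1 else 0)"
    proof (cases "i = j")
      case True
      then show ?thesis using hi B(3) by (simp add: dot_square_norm)
    next
      case False
      then have "h i \<noteq> h j" using h unfolding bij_betw_def inj_on_def by auto
      then show ?thesis using hi B(4) False by auto
    qed
  next
    fix i
    have "h i \<in> B" using bij_betw_apply[OF h] by auto
    then have "\<exists>m. S *v h i = m *\<^sub>R h i" using B(3) by auto
    then show "S *v h i = \<mu> i *\<^sub>R h i" unfolding \<mu>_def by (rule someI_ex)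
  qed
qed

definition qmat :: "('n \<Rightarrow> real^'n) \<Rightarrow> real^'n^'n" where
  "qmat q = (\<chi> i j. q j $ i)"

lemma qmat_orth:
  fixes q :: "'n::finite \<Rightarrow> real^'n"
  assumes "\<And>i j. q i \<bullet> q j = (if i = j then 1 else 0)"
  shows "transpose (qmat q) ** qmat q = mat 1" "qmat q ** transpose (qmat q) = mat 1"
proof -
  show 1: "transpose (qmat q) ** qmat q = mat 1"
    using assms by (simp add: vec_eq_iff matrix_matrix_mult_def transpose_def qmat_def mat_def inner_vec_def)
  then show "qmat q ** transpose (qmat q) = mat 1" using matrix_left_right_inverse by blast
qed

lemma mat_col: fixes q :: "'n::finite \<Rightarrow> real^'n" shows "((T::real^'n^'n) ** qmat q) $ k $ i = (T *v q i) $ k"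
  by (simp add: matrix_matrix_mult_def matrix_vector_mult_def qmat_def)

lemma qT_mult: fixes q :: "'n::finite \<Rightarrow> real^'n"
  shows "(transpose (qmat q) ** M) $ i $ j = (\<Sum>k\<in>UNIV. q i $ k * M $ k $ j)"
  by (simp add: matrix_matrix_mult_def transpose_def qmat_def)

lemma orthonormal_trace:
  fixes T :: "real^'n^'n" and q :: "'n \<Rightarrow> real^'n"
  assumes "\<And>i j. q i \<bullet> q j = (if i = j then 1 else 0)"
  shows "trace T = (\<Sum>i\<in>UNIV. q i \<bullet> (T *v q i))"
proof -
  have "trace T = trace (T ** (qmat q ** transpose (qmat q)))"
    using qmat_orth[OF assms] by simp
  also have "\<dots> = trace (transpose (qmat q) ** (T ** qmat q))"
    by (metis matrix_mul_assoc trace_mul_sym)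
  also have "\<dots> = (\<Sum>i\<in>UNIV. q i \<bullet> (T *v q i))"
    unfolding trace_def by (simp add: qT_mult mat_col inner_vec_def)
  finally show ?thesis .
qed

definition pl :: "real^'n^'n \<Rightarrow> real poly^'n^'n" where
  "pl A = (\<chi> i j. [:A $ i $ j:])"

definition Xm :: "real poly^'n^'n" where
  "Xm = (\<chi> i j. if i = j then [:0, 1:] else 0)"

lemma pl_mult: "pl (A ** B) = pl A ** pl B"
  by (simp add: pl_def vec_eq_iff matrix_matrix_mult_def sum_to_poly mult_to_poly) (simp add: mult.commute)

lemma pl_one: "pl (mat 1) = mat 1"
  by (simp add: pl_def vec_eq_iff mat_def)

lemma Xm_left: "Xm ** A = (\<chi> i j. [:0, 1:] * A $ i $ j)"
proof -
  have "(\<Sum>k\<in>UNIV. (if i = k then [:0, 1:] else 0) * A $ k $ j) = [:0, 1:] * A $ i $ j" for i j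
    by (simp add: if_distrib[where f="\<lambda>x. x * _"] cong: if_cong)
  then show ?thesis by (simp add: Xm_def vec_eq_iff matrix_matrix_mult_def)
qed

lemma Xm_right: "A ** Xm = (\<chi> i j. [:0, 1:] * A $ i $ j)"
proof -
  have "(\<Sum>k\<in>UNIV. A $ i $ k * (if k = j then [:0, 1:] else 0)) = [:0, 1:] * A $ i $ j" for i j
    by (simp add: if_distrib[where f="\<lambda>x. _ * x"] mult.commute cong: if_cong)
  then show ?thesis by (simp add: Xm_def vec_eq_iff matrix_matrix_mult_def)
qed

lemma msub_ldistrib: "(A::'a::comm_ring_1^'n^'n) ** (B - C) = A ** B - A ** C"
  by (simp add: vec_eq_iff matrix_matrix_mult_def sum_subtractf algebra_simps)

lemma msub_rdistrib: "((B::'a::comm_ring_1^'n^'n) - C) ** A = B ** A - C ** A"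
  by (simp add: vec_eq_iff matrix_matrix_mult_def sum_subtractf algebra_simps)

lemma charpoly_Xm: "charpoly S = det (Xm - pl S)"
  unfolding charpoly_def Xm_def pl_def
  by (rule arg_cong[where f=det]) (simp add: vec_eq_iff)

lemma charpoly_eig:
  fixes S :: "real^'n^'n" and q :: "'n \<Rightarrow> real^'n"
  assumes on: "\<And>i j. q i \<bullet> q j = (if i = j then 1 else 0)"
    and ev: "\<And>i. S *v q i = \<mu> i *\<^sub>R q i"
  shows "charpoly S = (\<Prod>i\<in>UNIV. [:- \<mu> i, 1:])"
proof -
  define Q where "Q = qmat q"
  define D where "D = transpose Q ** S ** Q"
  have D: "D $ i $ j = (if i = j then \<mu> i else 0)" for i j
  proof -
    have "D $ i $ j = (\<Sum>k\<in>UNIV. q i $ k * (S *v q j) $ k)"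
      unfolding D_def Q_def matrix_mul_assoc[symmetric]
      by (simp add: qT_mult mat_col)
    also have "\<dots> = q i \<bullet> (S *v q j)" by (simp add: inner_vec_def)
    also have "\<dots> = (if i = j then \<mu> i else 0)" using on ev by simp
    finally show ?thesis .
  qed
  have QQ: "transpose Q ** Q = mat 1" using qmat_orth[OF on] Q_def by simp
  have XX: "pl (transpose Q) ** Xm ** pl Q = Xm"
  proof -
    have "pl (transpose Q) ** Xm = Xm ** pl (transpose Q)" by (simp add: Xm_left Xm_right)
    then have "pl (transpose Q) ** Xm ** pl Q = Xm ** (pl (transpose Q) ** pl Q)"
      by (simp add: matrix_mul_assoc)
    also have "\<dots> = Xm" by (simp add: pl_mult[symmetric] QQ pl_one)
    finally show ?thesis .
  qed
  have key: "pl (transpose Q) ** (Xm - pl S) ** pl Q = Xm - pl D"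
    unfolding msub_ldistrib msub_rdistrib XX D_def pl_mult by simp
  have d1: "det (pl (transpose Q)) * det (pl Q) = 1"
    by (simp add: det_mul[symmetric] pl_mult[symmetric] QQ pl_one)
  have "det (Xm - pl D) = (\<Prod>i\<in>UNIV. [:- \<mu> i, 1:])"
    by (subst det_diagonal) (auto simp: Xm_def pl_def D)
  moreover have "det (Xm - pl D) = det (Xm - pl S)"
    unfolding key[symmetric] det_mul using d1 by (simp add: algebra_simps)
  ultimately show ?thesis using charpoly_Xm[of S] by simp
qed



lemma sum_single_mset: "finite A \<Longrightarrow> (\<Sum>i\<in>A. {#g i#}) = image_mset g (mset_set A)"
  by (induction rule: finite_induct) auto

lemma eigval_sum:
  fixes S :: "real^'n^'n" and \<mu> :: "'n \<Rightarrow> real"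
  assumes cp: "charpoly S = (\<Prod>i\<in>UNIV. [:- \<mu> i, 1:])"
  shows "(\<Sum>k=1..CARD('n). f (eigval k S)) = (\<Sum>i\<in>UNIV. f (\<mu> i))"
proof -
  define M where "M = image_mset \<mu> (mset_set (UNIV :: 'n set))"
  have "proots (charpoly S) = (\<Sum>i\<in>UNIV. proots [:- \<mu> i, 1:])"
    unfolding cp by (rule proots_prod) simp
  also have "\<dots> = (\<Sum>i\<in>UNIV. {#\<mu> i#})" by simp
  also have "\<dots> = M" unfolding M_def
    by (rule sum_single_mset) simp
  finally have pM: "proots (charpoly S) = M" .
  define L where "L = sorted_list_of_multiset M"
  have mL: "mset L = M" unfolding L_def by simp
  have lenL: "length L = CARD('n)" 
    by (metis mL M_def card_UNIV_length_enum finite_UNIV size_image_mset size_mset size_mset_set)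
  have "(\<Sum>k=1..CARD('n). f (eigval k S)) = (\<Sum>k=1..CARD('n). f (L ! (k - 1)))"
    unfolding eigval_def pM L_def by simp
  also have "\<dots> = (\<Sum>k<CARD('n). f (L ! k))"
    by (simp add: sum.atLeast1_atMost_eq)
  also have "\<dots> = sum_list (map f L)"
    by (simp add: sum_list_sum_nth lenL atLeast0LessThan)
  also have "\<dots> = sum_mset (image_mset f M)"
    by (metis mL mset_map sum_mset_sum_list)
  also have "\<dots> = (\<Sum>i\<in>UNIV. f (\<mu> i))"
    unfolding M_def by (simp add: sum_unfold_sum_mset image_mset.compositionality o_def)
  finally show ?thesis .
qed



lemma inv_mat:
  assumes "invertible (M::real^'n^'n)"
  shows "M ** matrix_inv M = mat 1" "matrix_inv M ** M = mat 1"
proof -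
  have "\<exists>M'. M ** M' = mat 1 \<and> M' ** M = mat 1" using assms unfolding invertible_def by blast
  then have "M ** matrix_inv M = mat 1 \<and> matrix_inv M ** M = mat 1"
    unfolding matrix_inv_def by (rule someI_ex)
  then show "M ** matrix_inv M = mat 1" "matrix_inv M ** M = mat 1" by auto
qed

lemma sym_inv:
  assumes "invertible (M::real^'n^'n)" "transpose M = M"
  shows "transpose (matrix_inv M) = matrix_inv M"
proof -
  have "transpose (matrix_inv M) ** M = mat 1"
    by (metis assms(2) inv_mat(1)[OF assms(1)] matrix_transpose_mul transpose_mat)
  then have "transpose (matrix_inv M) = transpose (matrix_inv M) ** (M ** matrix_inv M)"
    using inv_mat[OF assms(1)] by simp
  also have "\<dots> = matrix_inv M" 
    by (simp add: matrix_mul_assoc \<open>transpose (matrix_inv M) ** M = mat 1\<close>)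
  finally show ?thesis .
qed

lemma Vmat_entry: "Vmat A p $ i $ j = (\<Sum>a\<in>A. p a * (a $ i * a $ j))"
  by (simp add: Vmat_def outer_def sum_component)

lemma Vmat_sym: "transpose (Vmat A p) = Vmat A p"
  by (simp add: vec_eq_iff transpose_def Vmat_entry mult.commute)

lemma Vmat_mv: "Vmat A p *v x = (\<Sum>a\<in>A. (p a * (a \<bullet> x)) *\<^sub>R a)"
proof -
  have "(\<Sum>j\<in>UNIV. (\<Sum>a\<in>A. p a * (a $ i * a $ j)) * x $ j) = (\<Sum>a\<in>A. p a * (\<Sum>j\<in>UNIV. a $ j * x $ j) * a $ i)" for i
    by (simp add: sum_distrib_left sum_distrib_right algebra_simps sum.swap[of _ UNIV A])
  then show ?thesis
    by (simp add: vec_eq_iff matrix_vector_mult_def Vmat_entry sum_component inner_vec_def)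
qed

lemma Vmat_bil: "y \<bullet> (Vmat A p *v x) = (\<Sum>a\<in>A. p a * (a \<bullet> x) * (a \<bullet> y))"
  by (simp add: Vmat_mv inner_sum_right inner_commute)

lemma Vmat_quad: "x \<bullet> (Vmat A p *v x) = (\<Sum>a\<in>A. p a * (a \<bullet> x)^2)"
  by (simp add: Vmat_bil power2_eq_square mult.assoc)

lemma Vmat_lin: "Vmat A (\<lambda>a. c * p a + e * q a) = c *\<^sub>R Vmat A p + e *\<^sub>R Vmat A q"
  by (simp add: Vmat_def scaleR_add_left sum.distrib scaleR_sum_right)

lemma trace_scale: "trace (c *\<^sub>R (X::real^'n^'n)) = c * trace X"
  by (simp add: trace_def sum_distrib_left)

lemma mult_scale_right: "(H::real^'n^'n) ** (c *\<^sub>R X) = c *\<^sub>R (H ** X)"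
  by (simp add: vec_eq_iff matrix_matrix_mult_def sum_distrib_left algebra_simps)

lemma trace_lin: "trace ((H::real^'n^'n) ** (c *\<^sub>R X + e *\<^sub>R Y)) = c * trace (H ** X) + e * trace (H ** Y)"
  by (simp add: matrix_add_ldistrib trace_add mult_scale_right trace_scale)

lemma trace_outer: "trace ((H::real^'n^'n) ** outer a) = a \<bullet> (H *v a)"
  by (simp add: trace_def matrix_matrix_mult_def outer_def inner_vec_def matrix_vector_mult_def
      sum_distrib_left sum_distrib_right algebra_simps)

lemma trace_Vmat: "trace ((H::real^'n^'n) ** Vmat A p) = (\<Sum>a\<in>A. p a * (a \<bullet> (H *v a)))"
proof -
  have "trace (H ** Vmat A p) = (\<Sum>i\<in>UNIV. \<Sum>k\<in>UNIV. H $ i $ k * (\<Sum>a\<in>A. p a * (a $ k * a $ i)))"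
    by (simp add: trace_def matrix_matrix_mult_def Vmat_entry)
  also have "\<dots> = (\<Sum>a\<in>A. p a * (\<Sum>i\<in>UNIV. a $ i * (\<Sum>k\<in>UNIV. H $ i $ k * a $ k)))"
    by (simp add: sum_distrib_left sum_distrib_right algebra_simps sum.swap[of _ UNIV A])
  also have "\<dots> = (\<Sum>a\<in>A. p a * (a \<bullet> (H *v a)))"
    by (simp add: inner_vec_def matrix_vector_mult_def)
  finally show ?thesis .
qed

lemma quad_cs:
  fixes a b c :: real
  assumes "\<And>t. 0 \<le> a + 2*t*b + t^2*c" "0 \<le> c"
  shows "b^2 \<le> a * c"
proof (cases "c = 0")
  case True
  have "b = 0"
  proof (rule ccontr)
    assume "b \<noteq> 0"
    have "0 \<le> a + 2*(-(a+1)/(2*b))*b + (-(a+1)/(2*b))^2*c" by (rule assms)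
    also have "\<dots> = -1" using True \<open>b \<noteq> 0\<close> by (simp add: field_simps)
    finally show False by simp
  qed
  then show ?thesis using True by simp
next
  case False
  then have c: "c > 0" using assms(2) by simp
  have "0 \<le> a + 2*(-b/c)*b + (-b/c)^2*c" by (rule assms)
  also have "\<dots> = a - b^2/c" using c by (simp add: field_simps power2_eq_square)
  finally show ?thesis using c by (simp add: field_simps)
qed

lemma psd_cs:
  fixes S :: "real^'n^'n"
  assumes sym: "transpose S = S" and psd: "\<And>x. 0 \<le> x \<bullet> (S *v x)"
  shows "(u \<bullet> (S *v v))^2 \<le> (u \<bullet> (S *v u)) * (v \<bullet> (S *v v))"
proof (rule quad_cs)
  fix t :: real
  have sv: "v \<bullet> (S *v u) = u \<bullet> (S *v v)" using sym_inner[OF sym, of v u] by (simp add: inner_commute)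
  have "(u + t *\<^sub>R v) \<bullet> (S *v (u + t *\<^sub>R v)) = u \<bullet> (S *v u) + 2*t*(u \<bullet> (S *v v)) + t^2*(v \<bullet> (S *v v))"
    using sv by (simp add: matrix_vector_right_distrib matrix_vector_mult_scaleR algebra_simps power2_eq_square)
  then show "0 \<le> u \<bullet> (S *v u) + 2*t*(u \<bullet> (S *v v)) + t^2*(v \<bullet> (S *v v))"
    using psd[of "u + t *\<^sub>R v"] by simp
qed (rule psd)



lemma wval_eq: "wval A poff al p a = (1 - al) * (a \<bullet> (Hmat A poff al p *v a)) + al * trace (Hmat A poff al p ** Vmat A poff)"
  unfolding wval_def by (simp add: trace_lin trace_outer)

lemma trace_HM:
  fixes A :: "(real^'n) set"
  assumes "invertible ((1 - al) *\<^sub>R Vmat A p + al *\<^sub>R Vmat A poff)"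
  shows "(1 - al) * trace (Hmat A poff al p ** Vmat A p) + al * trace (Hmat A poff al p ** Vmat A poff) = real CARD('n)"
proof -
  have "(1 - al) * trace (Hmat A poff al p ** Vmat A p) + al * trace (Hmat A poff al p ** Vmat A poff)
       = trace (Hmat A poff al p ** ((1 - al) *\<^sub>R Vmat A p + al *\<^sub>R Vmat A poff))"
    by (simp add: trace_lin)
  also have "\<dots> = trace (mat 1 :: real^'n^'n)" unfolding Hmat_def using inv_mat(2)[OF assms] by simp
  finally show ?thesis by (simp add: trace_I)
qed

lemma sum_Al_A:
  fixes p f :: "'a \<Rightarrow> real"
  assumes "finite A" "Al \<subseteq> A" "\<forall>a. a \<notin> Al \<longrightarrow> p a = 0"
  shows "(\<Sum>a\<in>Al. p a * f a) = (\<Sum>a\<in>A. p a * f a)"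
  by (rule sum.mono_neutral_left) (use assms in auto)

lemma wsum:
  fixes A Al :: "(real^'n) set"
  assumes "finite A" "Al \<subseteq> A" "\<forall>a. a \<notin> Al \<longrightarrow> p a = 0" "(\<Sum>a\<in>Al. p a) = 1"
    and inv: "invertible ((1 - al) *\<^sub>R Vmat A p + al *\<^sub>R Vmat A poff)"
  shows "(\<Sum>a\<in>Al. p a * wval A poff al p a) = real CARD('n)"
proof -
  let ?H = "Hmat A poff al p"
  have eq: "p a * wval A poff al p a = (1 - al) * (p a * (a \<bullet> (?H *v a))) + (al * trace (?H ** Vmat A poff)) * p a" for a
    by (simp add: wval_eq algebra_simps)
  have "(\<Sum>a\<in>Al. p a * wval A poff al p a) = (1 - al) * (\<Sum>a\<in>Al. p a * (a \<bullet> (?H *v a))) + al * trace (?H ** Vmat A poff) * (\<Sum>a\<in>Al. p a)"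
    unfolding eq by (simp add: sum.distrib sum_distrib_left[symmetric])
  also have "\<dots> = (1 - al) * trace (?H ** Vmat A p) + al * trace (?H ** Vmat A poff)"
    using sum_Al_A[OF assms(1-3), of "\<lambda>a. a \<bullet> (?H *v a)"] assms(4) by (simp add: trace_Vmat)
  also have "\<dots> = real CARD('n)" by (rule trace_HM[OF inv])
  finally show ?thesis .
qed

lemma fw_inv:
  fixes A Al :: "((real, 'n::{finite,wellorder}) vec) set"
  assumes "fw_iter A Al poff al p" "finite A" "Al \<subseteq> A" "CARD('n) \<ge> 2"
  shows "(\<forall>a. 0 \<le> p a) \<and> (\<forall>a. a \<notin> Al \<longrightarrow> p a = 0) \<and> (\<Sum>a\<in>Al. p a) = 1"
  using assms(1)
proof induction
  case (init bs)
  have len: "length bs = CARD('n)" and bsi: "\<forall>i<CARD('n). bs ! i \<in> Al"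
    using init unfolding fw_init_def by auto
  have sub: "set bs \<subseteq> Al" using len bsi by (auto simp: in_set_conv_nth)
  have ne: "set bs \<noteq> {}" using len by auto
  have fA: "finite Al" using assms(2,3) finite_subset by blast
  have "(\<Sum>a\<in>Al. unif (set bs) a) = (\<Sum>a\<in>set bs. 1 / real (card (set bs)))"
    unfolding unif_def by (rule sum.mono_neutral_cong_right) (use fA sub in auto)
  also have "\<dots> = 1" using ne by simp
  finally show ?case using sub by (auto simp: unif_def)
next
  case (step p ap \<beta>)
  let ?w = "wval A poff al p"
  let ?d = "real CARD('n)"
  have p: "\<forall>a. 0 \<le> p a" "\<forall>a. a \<notin> Al \<longrightarrow> p a = 0" "(\<Sum>a\<in>Al. p a) = 1" using step.IH by auto
  have fA: "finite Al" using assms(2,3) finite_subset by blast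
  have "?d = (\<Sum>a\<in>Al. p a * ?w a)" using wsum[OF assms(2,3) p(2,3) step.hyps(2)] by simp
  also have "\<dots> \<le> (\<Sum>a\<in>Al. p a * ?w ap)"
    by (rule sum_mono) (use p(1) step.hyps(4) in \<open>auto intro: mult_left_mono\<close>)
  also have "\<dots> = ?w ap" using p(3) by (simp add: sum_distrib_right[symmetric])
  finally have wap: "?d \<le> ?w ap" .
  have d2: "?d \<ge> 2" using assms(4) by simp
  have b0: "\<beta> \<ge> 0" unfolding step.hyps(5) using wap d2
    by (intro divide_nonneg_pos) auto
  show ?case
  proof (intro conjI allI impI)
    fix a show "0 \<le> (p a + \<beta> * (if a = ap then 1 else 0)) / (1 + \<beta>)"
      using p(1) b0 by simp
  next
    fix a assume "a \<notin> Al"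
    then show "(p a + \<beta> * (if a = ap then 1 else 0)) / (1 + \<beta>) = 0"
      using p(2) step.hyps(3) by auto
  next
    have "(\<Sum>a\<in>Al. (p a + \<beta> * (if a = ap then 1 else 0)) / (1 + \<beta>)) = (\<Sum>a\<in>Al. p a + \<beta> * (if a = ap then 1 else 0)) / (1 + \<beta>)"
      by (simp add: sum_divide_distrib)
    also have "\<dots> = (1 + \<beta>) / (1 + \<beta>)" using p(3) step.hyps(3) fA
      by (simp add: sum.distrib if_distrib[where f="\<lambda>x. \<beta> * x"] cong: if_cong)
    also have "\<dots> = 1" using b0 by simp
    finally show "(\<Sum>a\<in>Al. (p a + \<beta> * (if a = ap then 1 else 0)) / (1 + \<beta>)) = 1" .
  qed
qed



locale setting =
  fixes A :: "(real^'n) set" and p poff :: "real^'n \<Rightarrow> real" and al L :: real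
  assumes fin: "finite A"
    and pnn: "\<And>a. 0 \<le> p a" and psum: "(\<Sum>a\<in>A. p a) = 1"
    and poffnn: "\<And>a. 0 \<le> poff a"
    and al0: "0 \<le> al" and al1: "al < 1"
    and Lb: "\<And>a. a \<in> A \<Longrightarrow> (norm a)^2 \<le> L" and Lpos: "L > 0"
    and inv: "invertible ((1 - al) *\<^sub>R Vmat A p + al *\<^sub>R Vmat A poff)"
begin

abbreviation "M \<equiv> (1 - al) *\<^sub>R Vmat A p + al *\<^sub>R Vmat A poff"
abbreviation "H \<equiv> Hmat A poff al p"

lemma H_def': "H = matrix_inv M" unfolding Hmat_def ..

lemma symM: "transpose M = M"
  using Vmat_sym[of A p] Vmat_sym[of A poff] by (simp add: vec_eq_iff transpose_def)

lemma psd_Vp: "0 \<le> x \<bullet> (Vmat A p *v x)"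
  unfolding Vmat_quad using pnn by (simp add: sum_nonneg)

lemma psd_V0: "0 \<le> x \<bullet> (Vmat A poff *v x)"
  unfolding Vmat_quad using poffnn by (simp add: sum_nonneg)

lemma smv: "((c::real) *\<^sub>R (X::real^'n^'n)) *v x = c *\<^sub>R (X *v x)"
  by (simp add: vec_eq_iff matrix_vector_mult_def sum_distrib_left algebra_simps)

lemma quadM: "x \<bullet> (M *v x) = (1 - al) * (x \<bullet> (Vmat A p *v x)) + al * (x \<bullet> (Vmat A poff *v x))"
  by (simp add: matrix_vector_mult_add_rdistrib smv inner_add_right)

lemma psdM: "0 \<le> x \<bullet> (M *v x)"
  unfolding quadM using psd_Vp psd_V0 al0 al1 by (simp add: add_nonneg_nonneg)

lemma symH: "transpose H = H"
  unfolding H_def' by (rule sym_inv[OF inv symM])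

lemma MH: "M *v (H *v x) = x"
  unfolding H_def' by (simp add: matrix_vector_mul_assoc inv_mat(1)[OF inv])

lemma HM: "H *v (M *v x) = x"
  unfolding H_def' by (simp add: matrix_vector_mul_assoc inv_mat(2)[OF inv])

lemma quadH: "x \<bullet> (H *v x) = (H *v x) \<bullet> (M *v (H *v x))"
  by (simp add: MH inner_commute)

lemma inv_quad_lower:
  assumes "norm q = 1"
  shows "1 \<le> (q \<bullet> (M *v q)) * (q \<bullet> (H *v q))"
proof -
  have "(q \<bullet> (M *v (H *v q)))^2 \<le> (q \<bullet> (M *v q)) * ((H *v q) \<bullet> (M *v (H *v q)))"
    by (rule psd_cs[OF symM psdM])
  moreover have "q \<bullet> q = 1" using assms by (simp add: dot_square_norm)
  then have "q \<bullet> (M *v (H *v q)) = 1" by (simp add: MH)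
  ultimately show ?thesis by (simp add: quadH)
qed

lemma Vp_le:
  assumes "norm q = 1"
  shows "q \<bullet> (Vmat A p *v q) \<le> L"
proof -
  have "q \<bullet> (Vmat A p *v q) = (\<Sum>a\<in>A. p a * (a \<bullet> q)^2)" by (rule Vmat_quad)
  also have "\<dots> \<le> (\<Sum>a\<in>A. p a * L)"
  proof (rule sum_mono)
    fix a assume a: "a \<in> A"
    have "\<bar>a \<bullet> q\<bar> \<le> norm a" using Cauchy_Schwarz_ineq2[of a q] assms by simp
    then have "(a \<bullet> q)^2 \<le> (norm a)^2"
      by (metis abs_ge_zero power2_abs power_mono)
    also have "\<dots> \<le> L" using Lb[OF a] .
    finally show "p a * (a \<bullet> q)^2 \<le> p a * L" using pnn by (simp add: mult_left_mono)
  qed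
  also have "\<dots> = L" using psum by (simp add: sum_distrib_right[symmetric])
  finally show ?thesis .
qed

lemma bound_s:
  "(1 - al) * trace (H ** Vmat A p)
     \<le> (\<Sum>k=1..CARD('n). inverse (1 + (al / (1 - al)) * (eigval k (Vmat A poff) / L)))"
proof -
  obtain q :: "'n \<Rightarrow> real^'n" and \<mu> where
    on: "\<And>i j. q i \<bullet> q j = (if i = j then 1 else 0)" and ev: "\<And>i. Vmat A poff *v q i = \<mu> i *\<^sub>R q i"
    using spectral[OF Vmat_sym] by blast
  have nq: "norm (q i) = 1" for i using on[of i i] by (simp add: norm_eq_sqrt_inner)
  have mu0: "0 \<le> \<mu> i" for i using psd_V0[of "q i"] ev[of i] on[of i i] by simp
  define c where "c i = (1 - al) * L + al * \<mu> i" for i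
  have cpos: "c i > 0" for i unfolding c_def using al0 al1 Lpos mu0[of i]
    by (simp add: add_pos_nonneg)
  have hlow: "1 / c i \<le> q i \<bullet> (H *v q i)" for i
  proof -
    let ?m = "q i \<bullet> (M *v q i)" and ?h = "q i \<bullet> (H *v q i)"
    have 1: "1 \<le> ?m * ?h" by (rule inv_quad_lower[OF nq])
    have m0: "0 \<le> ?m" by (rule psdM)
    have mc: "?m \<le> c i" unfolding quadM c_def
      using Vp_le[OF nq, of i] ev[of i] on[of i i] al1 by (simp add: mult_left_mono)
    have hpos: "?h > 0"
    proof (rule ccontr)
      assume "\<not> ?h > 0"
      then have "?m * ?h \<le> 0" using m0 by (simp add: mult_nonneg_nonpos)
      then show False using 1 by simp
    qed
    have "1 \<le> c i * ?h" using 1 mc hpos by (meson mult_right_mono order_trans less_imp_le)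
    then show ?thesis using cpos[of i] by (simp add: divide_le_eq mult.commute)
  qed
  have trV0: "trace (H ** Vmat A poff) = (\<Sum>i\<in>UNIV. \<mu> i * (q i \<bullet> (H *v q i)))"
    unfolding orthonormal_trace[OF on] by (simp add: matrix_vector_mul_assoc[symmetric] ev matrix_vector_mult_scaleR)
  have "(1 - al) * trace (H ** Vmat A p) = real CARD('n) - al * trace (H ** Vmat A poff)"
    using trace_HM[OF inv] by simp
  also have "\<dots> = (\<Sum>i\<in>UNIV. 1 - al * \<mu> i * (q i \<bullet> (H *v q i)))"
    unfolding trV0 by (simp add: sum_subtractf sum_distrib_left mult.assoc)
  also have "\<dots> \<le> (\<Sum>i\<in>UNIV. 1 - al * \<mu> i * (1 / c i))"
  proof (rule sum_mono)
    fix i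
    have "al * \<mu> i * (1 / c i) \<le> al * \<mu> i * (q i \<bullet> (H *v q i))"
      using mult_left_mono[OF hlow[of i], of "al * \<mu> i"] al0 mu0[of i] by simp
    then show "1 - al * \<mu> i * (q i \<bullet> (H *v q i)) \<le> 1 - al * \<mu> i * (1 / c i)" by simp
  qed
  also have "\<dots> = (\<Sum>i\<in>UNIV. inverse (1 + (al / (1 - al)) * (\<mu> i / L)))"
  proof (rule sum.cong[OF refl])
    fix i
    define K where "K = (1 - al) * L"
    have Kp: "K > 0" unfolding K_def using al1 Lpos by simp
    have X: "1 + (al / (1 - al)) * (\<mu> i / L) = c i / K"
      unfolding c_def K_def using al1 Lpos by (simp add: field_simps)
    have Y: "1 - al * \<mu> i * (1 / c i) = K / c i"
      using cpos[of i] unfolding c_def K_def by (simp add: field_simps)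
    show "1 - al * \<mu> i * (1 / c i) = inverse (1 + (al / (1 - al)) * (\<mu> i / L))"
      unfolding X Y by simp
  qed
  also have "\<dots> = (\<Sum>k=1..CARD('n). inverse (1 + (al / (1 - al)) * (eigval k (Vmat A poff) / L)))"
    by (rule eigval_sum[OF charpoly_eig[OF on ev], where f="\<lambda>x. inverse (1 + (al / (1 - al)) * (x / L))", symmetric])
  finally show ?thesis .
qed

lemma bound_g:
  assumes alp: "al > 0" and inv0: "invertible (Vmat A poff)"
  shows "(1 - al) * trace (H ** Vmat A p) \<le> ((1 - al) / al) * gval A A poff"
proof -
  define G where "G = matrix_inv (Vmat A poff)"
  have VG: "Vmat A poff *v (G *v x) = x" for x
    unfolding G_def by (simp add: matrix_vector_mul_assoc inv_mat(1)[OF inv0])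
  have symG: "transpose G = G" unfolding G_def by (rule sym_inv[OF inv0 Vmat_sym])
  have ptw: "x \<bullet> (H *v x) \<le> (x \<bullet> (G *v x)) / al" for x
  proof -
    define u where "u = H *v x"
    define r where "r = u \<bullet> (M *v u)"
    have xr: "x \<bullet> (H *v x) = r" unfolding r_def u_def by (rule quadH)
    have ux: "u \<bullet> x = r" unfolding r_def u_def by (simp add: MH)
    have r0: "0 \<le> r" unfolding r_def by (rule psdM)
    have xG: "x \<bullet> (G *v x) = (G *v x) \<bullet> (Vmat A poff *v (G *v x))" by (simp add: VG inner_commute)
    have xG0: "0 \<le> x \<bullet> (G *v x)" unfolding xG by (rule psd_V0)
    have "(u \<bullet> (Vmat A poff *v (G *v x)))^2 \<le> (u \<bullet> (Vmat A poff *v u)) * ((G *v x) \<bullet> (Vmat A poff *v (G *v x)))"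
      by (rule psd_cs[OF Vmat_sym psd_V0])
    then have cs: "r^2 \<le> (u \<bullet> (Vmat A poff *v u)) * (x \<bullet> (G *v x))" using ux xG VG by simp
    have "al * (u \<bullet> (Vmat A poff *v u)) \<le> r"
      unfolding r_def quadM using psd_Vp[of u] al1 by simp
    then have "al * r^2 \<le> r * (x \<bullet> (G *v x))"
      using cs xG0 alp by (smt (verit) mult_left_mono mult_right_mono mult.assoc mult.commute)
    then have "al * r \<le> x \<bullet> (G *v x)" if "r > 0"
      using that by (simp add: power2_eq_square mult.assoc mult.commute mult.left_commute)
    then have "al * r \<le> x \<bullet> (G *v x)" using r0 xG0 by (cases "r = 0") auto
    then show ?thesis using xr alp by (simp add: field_simps mult.commute)
  qed
  have "(1 - al) * trace (H ** Vmat A p) = (1 - al) * (\<Sum>a\<in>A. p a * (a \<bullet> (H *v a)))"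
    by (simp add: trace_Vmat)
  also have "\<dots> \<le> (1 - al) * (\<Sum>a\<in>A. p a * (gval A A poff / al))"
  proof (rule mult_left_mono, rule sum_mono)
    fix a assume a: "a \<in> A"
    have "a \<bullet> (G *v a) \<le> gval A A poff"
      unfolding gval_def G_def using a fin by (intro Max_ge) auto
    then have "a \<bullet> (H *v a) \<le> gval A A poff / al"
      using ptw[of a] alp by (smt (verit) divide_right_mono)
    then show "p a * (a \<bullet> (H *v a)) \<le> p a * (gval A A poff / al)"
      using mult_left_mono[OF _ pnn[of a]] by blast
  qed (use al1 in simp)
  also have "\<dots> = ((1 - al) / al) * gval A A poff"
    by (simp only: sum_distrib_right[symmetric] psum) simp
  finally show ?thesis .
qed

end



theorem proposition5p7:
  fixes A Al :: "((real, 'n::{finite,wellorder}) vec) set"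
    and poff p :: "(real, 'n) vec \<Rightarrow> real"
    and T Toff :: nat
  assumes "finite A" and "span A = UNIV" and "CARD('n::{finite,wellorder}) \<ge> 2"
    and "poff \<in> prob_dists A"
    and "T \<ge> 1"
    and "Al \<subseteq> A" and "Al \<noteq> {}"
    and "fw_iter A Al poff (alpha T Toff) p"
    and "invertible ((1 - alpha T Toff) *\<^sub>R Vmat A p + alpha T Toff *\<^sub>R Vmat A poff)"
    and "slack A Al poff (alpha T Toff) p \<le> deff A poff T Toff / real CARD('n::{finite,wellorder})"
  shows "(1 - alpha T Toff) *
           gval A Al (\<lambda>a. (1 - alpha T Toff) * p a + alpha T Toff * poff a)
         \<le> 2 * deff A poff T Toff"
proof -
  note fin = assms(1) and spanA = assms(2) and d2 = assms(3) and poffd = assms(4)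
    and T1 = assms(5) and AlA = assms(6) and Alne = assms(7) and fw = assms(8)
    and inv = assms(9) and sl = assms(10)
  define al where "al = alpha T Toff"
  define d where "d = real CARD('n)"
  define L where "L = Max ((\<lambda>a. (norm a)^2) ` A)"
  have dpos: "d > 0" unfolding d_def by simp
  have al0: "0 \<le> al" unfolding al_def alpha_def by simp
  have al1: "al < 1" unfolding al_def alpha_def using T1 by (simp add: divide_less_eq)
  have pinv: "(\<forall>a. 0 \<le> p a) \<and> (\<forall>a. a \<notin> Al \<longrightarrow> p a = 0) \<and> (\<Sum>a\<in>Al. p a) = 1"
    using fw_inv[OF fw fin AlA d2] .
  have psumA: "(\<Sum>a\<in>A. p a) = 1"
  proof -
    have "(\<Sum>a\<in>Al. p a) = (\<Sum>a\<in>A. p a)"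
      by (rule sum.mono_neutral_left) (use fin AlA pinv in auto)
    then show ?thesis using pinv by simp
  qed
  have poffnn: "\<And>a. 0 \<le> poff a" using poffd unfolding prob_dists_def by auto
  have "\<exists>a\<in>A. a \<noteq> 0"
  proof (rule ccontr)
    assume "\<not> (\<exists>a\<in>A. a \<noteq> 0)"
    then have "A \<subseteq> {0}" by auto
    then have "span A \<subseteq> {0}" by (metis span_empty span_insert_0 subset_singletonD span_mono)
    moreover have "axis (undefined::'n) (1::real) \<noteq> 0" by (simp add: axis_eq_0_iff)
    ultimately show False using spanA by auto
  qed
  then obtain a1 where a1: "a1 \<in> A" "a1 \<noteq> 0" by blast
  have Lb: "\<And>a. a \<in> A \<Longrightarrow> (norm a)^2 \<le> L" unfolding L_def using fin by (intro Max_ge) auto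
  have Lpos: "L > 0" using Lb[OF a1(1)] a1(2) by (smt (verit) zero_less_norm_iff zero_less_power)
  interpret setting A p poff al L
    by unfold_locales (use fin pinv psumA poffnn al0 al1 Lb Lpos inv al_def in auto)
  define tX where "tX = (1 - al) * trace (H ** Vmat A p)"
  have tHM: "tX + al * trace (H ** Vmat A poff) = d"
    unfolding tX_def d_def using trace_HM[OF inv[folded al_def]] .
  have keyX: "tX \<le> deff A poff T Toff"
  proof (cases "Toff = 0")
    case True
    then have "al = 0" unfolding al_def alpha_def by simp
    then have "tX = d" using tHM by simp
    moreover have "deff A poff T Toff = d" unfolding deff_def d_def using True by simp
    ultimately show ?thesis by simp
  next
    case False
    have sp: "real Toff + real T > 0" "real T > 0" "real Toff > 0" using T1 False by auto
    have om: "1 - al = real T / (real Toff + real T)"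
      unfolding al_def alpha_def using sp by (simp add: field_simps)
    have alv: "al = real Toff / (real Toff + real T)" unfolding al_def alpha_def ..
    have ratio: "al / (1 - al) = real Toff / real T"
      unfolding om unfolding alv using sp by simp
    have bs: "tX \<le> (\<Sum>k=1..CARD('n). inverse (1 + (real Toff / real T) * (eigval k (Vmat A poff) / L)))"
      unfolding tX_def using bound_s unfolding ratio .
    show ?thesis
    proof (cases "invertible (Vmat A poff)")
      case True
      have alp: "al > 0" unfolding al_def alpha_def using False T1 by simp
      have r2: "(1 - al) / al = real T / real Toff"
        unfolding om unfolding alv using sp by simp
      have "tX \<le> (real T / real Toff) * gval A A poff"
        unfolding tX_def using bound_g[OF alp True] unfolding r2 .
      then show ?thesis using bs True False unfolding deff_def L_def Let_def by simp
    next
      case inv0: False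
      then show ?thesis using bs unfolding deff_def L_def Let_def by simp
    qed
  qed
  have fAl: "finite Al" using fin AlA finite_subset by blast
  have maxw: "Max (wval A poff al p ` Al) \<le> d + deff A poff T Toff"
  proof -
    have "Max (wval A poff al p ` Al) / d - 1 \<le> deff A poff T Toff / d"
      using sl unfolding slack_def al_def d_def by simp
    then have "d * Max (wval A poff al p ` Al) \<le> d * (d + deff A poff T Toff)"
      using dpos by (simp add: field_simps)
    then show ?thesis using dpos by (rule mult_left_le_imp_le)
  qed
  have Veq: "Vmat A (\<lambda>a. (1 - al) * p a + al * poff a) = (1 - al) *\<^sub>R Vmat A p + al *\<^sub>R Vmat A poff"
    by (rule Vmat_lin)
  have ptw: "(1 - al) * (a \<bullet> (H *v a)) \<le> 2 * deff A poff T Toff" if a: "a \<in> Al" for a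
  proof -
    have "wval A poff al p a \<le> Max (wval A poff al p ` Al)" using fAl a by (intro Max_ge) auto
    moreover have "wval A poff al p a = (1 - al) * (a \<bullet> (H *v a)) + al * trace (H ** Vmat A poff)"
      by (rule wval_eq)
    ultimately show ?thesis using maxw tHM keyX by linarith
  qed
  have "gval A Al (\<lambda>a. (1 - al) * p a + al * poff a) = Max ((\<lambda>a. a \<bullet> (H *v a)) ` Al)"
    unfolding gval_def Veq H_def' ..
  moreover obtain a0 where "a0 \<in> Al" "Max ((\<lambda>a. a \<bullet> (H *v a)) ` Al) = a0 \<bullet> (H *v a0)"
  proof -
    have "Max ((\<lambda>a. a \<bullet> (H *v a)) ` Al) \<in> (\<lambda>a. a \<bullet> (H *v a)) ` Al"
      using fAl Alne by (intro Max_in) auto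
    then show ?thesis using that by auto
  qed
  ultimately show ?thesis using ptw unfolding al_def by auto
qed

end
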